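(* Let $n\in\mathbb{Z}$ with $|n|\geq1$, $\alpha>0$, $R>0$, $\kappa\in\mathbb{R}$. An element $u\in H$ is a nontrivial critical point of $\mathcal{I}_\kappa$ if and only if $u\in\mathcal{M}$ and $u$ is a critical point of the restriction $\mathcal{I}_\kappa|_{\mathcal{M}}$.
   Context: $H$ is the completion of $\{u\in C^1[0,R]: u(0)=0=u(R)\}$ with respect to the inner product $(u,\tilde u)=\int_0^R\{ru_r\tilde u_r+\frac1r u\tilde u\}dr$. $\mathcal{I}_\kappa(u)=\frac12\int_0^R\{ru_r^2+\frac{n^2}{r}u^2-2(\alpha^{-1}-\kappa)ru^2+2\alpha^{-2}r\ln(1+\alpha u^2)\}dr$, a $C^1$ (indeed $C^3$) functional on $H$. Define $\gamma_\kappa(u)=\frac12\langle \mathcal{I}_\kappa'(u),u\rangle=\frac12\int_0^R\{ru_r^2+\frac{n^2}{r}u^2-2(\alpha^{-1}-\kappa)ru^2+2\alpha^{-1}\frac{ru^2}{1+\alpha u^2}\}dr$ and the Nehari manifold $\mathcal{M}=\{u\in H\setminus\{0\}:\gamma_\kappa(u)=0\}$. A critical point of $\mathcal{I}_\kappa|_{\mathcal{M}}$ is a point $u\in\mathcal{M}$ for which there is $\xi\in\mathbb{R}$ with $\mathcal{I}_\kappa'(u)=\xi\gamma_\kappa'(u)$ in $H^{-1}$. *)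

theory Defs
  imports "HOL-Analysis.Analysis"
begin

text \<open>An element of H is represented by a pair (u, v) of real functions on [0,R]:
  u is the function and v its (generalised) derivative u_r.  H is realised as the
  completion of the C^1 functions on [0,R] vanishing at 0 and R with respect to the
  norm induced by the inner product (u,w) = integral of r u_r w_r + u w / r.\<close>

type_synonym hpt = "(real \<Rightarrow> real) \<times> (real \<Rightarrow> real)"

definition C1_van :: "real \<Rightarrow> (real \<Rightarrow> real) \<Rightarrow> (real \<Rightarrow> real) \<Rightarrow> bool" where
  "C1_van R w w' \<longleftrightarrow>
     (\<forall>r\<in>{0..R}. (w has_real_derivative w' r) (at r within {0..R})) \<and>
     continuous_on {0..R} w' \<and> w 0 = 0 \<and> w R = 0"

definition Hip :: "real \<Rightarrow> hpt \<Rightarrow> hpt \<Rightarrow> real" where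
  "Hip R p q = integral {0..R} (\<lambda>r. r * snd p r * snd q r + fst p r * fst q r / r)"

definition Hnorm :: "real \<Rightarrow> hpt \<Rightarrow> real" where
  "Hnorm R p = sqrt (Hip R p p)"

definition padd :: "hpt \<Rightarrow> hpt \<Rightarrow> hpt" where
  "padd p q = ((\<lambda>r. fst p r + fst q r), (\<lambda>r. snd p r + snd q r))"

definition pscale :: "real \<Rightarrow> hpt \<Rightarrow> hpt" where
  "pscale c p = ((\<lambda>r. c * fst p r), (\<lambda>r. c * snd p r))"

definition Hsp :: "real \<Rightarrow> hpt set" where
  "Hsp R = {(u, v). (\<lambda>r. r * (v r)\<^sup>2) integrable_on {0..R} \<and>
      (\<lambda>r. (u r)\<^sup>2 / r) integrable_on {0..R} \<and>
      (\<exists>w w'. (\<forall>k. C1_van R (w k) (w' k)) \<and>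
         (\<forall>k. (\<lambda>r. r * (w' k r - v r)\<^sup>2 + (w k r - u r)\<^sup>2 / r) integrable_on {0..R}) \<and>
         ((\<lambda>k. integral {0..R} (\<lambda>r. r * (w' k r - v r)\<^sup>2 + (w k r - u r)\<^sup>2 / r))
            \<longlonglongrightarrow> 0))}"

definition Hdual :: "real \<Rightarrow> (hpt \<Rightarrow> real) \<Rightarrow> bool" where
  "Hdual R L \<longleftrightarrow>
     (\<forall>p\<in>Hsp R. \<forall>q\<in>Hsp R. L (padd p q) = L p + L q) \<and>
     (\<forall>p\<in>Hsp R. \<forall>c. L (pscale c p) = c * L p) \<and>
     (\<exists>C. \<forall>p\<in>Hsp R. \<bar>L p\<bar> \<le> C * Hnorm R p)"

definition has_H_deriv :: "real \<Rightarrow> (hpt \<Rightarrow> real) \<Rightarrow> hpt \<Rightarrow> (hpt \<Rightarrow> real) \<Rightarrow> bool" where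
  "has_H_deriv R F p L \<longleftrightarrow> Hdual R L \<and>
     (\<forall>\<epsilon>>0. \<exists>\<delta>>0. \<forall>q\<in>Hsp R. Hnorm R q < \<delta> \<longrightarrow>
         \<bar>F (padd p q) - F p - L q\<bar> \<le> \<epsilon> * Hnorm R q)"

definition Ikappa :: "int \<Rightarrow> real \<Rightarrow> real \<Rightarrow> real \<Rightarrow> hpt \<Rightarrow> real" where
  "Ikappa n \<alpha> \<kappa> R p = 1/2 * integral {0..R} (\<lambda>r.
      r * (snd p r)\<^sup>2 + (real_of_int n)\<^sup>2 / r * (fst p r)\<^sup>2
      - 2 * (1/\<alpha> - \<kappa>) * r * (fst p r)\<^sup>2
      + 2 * \<alpha> powi (-2) * r * ln (1 + \<alpha> * (fst p r)\<^sup>2))"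

definition gammak :: "int \<Rightarrow> real \<Rightarrow> real \<Rightarrow> real \<Rightarrow> hpt \<Rightarrow> real" where
  "gammak n \<alpha> \<kappa> R p = 1/2 * integral {0..R} (\<lambda>r.
      r * (snd p r)\<^sup>2 + (real_of_int n)\<^sup>2 / r * (fst p r)\<^sup>2
      - 2 * (1/\<alpha> - \<kappa>) * r * (fst p r)\<^sup>2
      + 2 * (1/\<alpha>) * r * (fst p r)\<^sup>2 / (1 + \<alpha> * (fst p r)\<^sup>2))"

definition Nehari :: "int \<Rightarrow> real \<Rightarrow> real \<Rightarrow> real \<Rightarrow> hpt set" where
  "Nehari n \<alpha> \<kappa> R = {p \<in> Hsp R. Hnorm R p \<noteq> 0 \<and> gammak n \<alpha> \<kappa> R p = 0}"

definition H_critical :: "real \<Rightarrow> (hpt \<Rightarrow> real) \<Rightarrow> hpt \<Rightarrow> bool" where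
  "H_critical R F p \<longleftrightarrow> p \<in> Hsp R \<and>
     (\<exists>L. has_H_deriv R F p L \<and> (\<forall>q\<in>Hsp R. L q = 0))"

definition M_critical :: "real \<Rightarrow> hpt set \<Rightarrow> (hpt \<Rightarrow> real) \<Rightarrow> (hpt \<Rightarrow> real) \<Rightarrow> hpt \<Rightarrow> bool" where
  "M_critical R M F G p \<longleftrightarrow> p \<in> M \<and>
     (\<exists>L K \<xi>. has_H_deriv R F p L \<and> has_H_deriv R G p K \<and>
        (\<forall>q\<in>Hsp R. L q = \<xi> * K q))"

end

theory Submission
  imports Defs
begin


lemma sets_lebesgue_Icc[simp]: "{0..(R::real)} \<in> sets lebesgue" by simp

lemma Hsp_meas:
  assumes "p \<in> Hsp R"
  shows "fst p \<in> borel_measurable (lebesgue_on {0..R}) \<and> snd p \<in> borel_measurable (lebesgue_on {0..R})"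
proof -
  obtain u v where p: "p = (u,v)" by (cases p)
  from assms obtain w w' where C: "\<And>k. C1_van R (w k) (w' k)"
    and I: "\<And>k. (\<lambda>r. r * (w' k r - v r)\<^sup>2 + (w k r - u r)\<^sup>2 / r) integrable_on {0..R}"
    and T: "(\<lambda>k. integral {0..R} (\<lambda>r. r * (w' k r - v r)\<^sup>2 + (w k r - u r)\<^sup>2 / r)) \<longlonglongrightarrow> 0"
    unfolding Hsp_def p by auto
  define S where "S = {0..R}"
  define d where "d k r = r * (w' k r - v r)\<^sup>2 + (w k r - u r)\<^sup>2 / r" for k r
  have dnn: "0 \<le> d k r" if "r \<in> S" for k r using that unfolding d_def S_def by auto
  have dint: "integrable (lebesgue_on S) (d k)" for k
    using I[of k] dnn unfolding S_def d_def
    by (intro absolutely_integrable_imp_integrable nonnegative_absolutely_integrable_1) auto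
  have deq: "(\<integral>x. norm (d k x) \<partial>lebesgue_on S) = integral S (d k)" for k
  proof -
    have "(\<integral>x. norm (d k x) \<partial>lebesgue_on S) = (\<integral>x. d k x \<partial>lebesgue_on S)"
      by (rule Bochner_Integration.integral_cong) (auto simp: dnn)
    also have "\<dots> = integral S (d k)" using dint[of k] by (simp add: lebesgue_integral_eq_integral S_def)
    finally show ?thesis .
  qed
  have "(\<lambda>k. (\<integral>x. norm (d k x) \<partial>lebesgue_on S)) \<longlonglongrightarrow> 0"
    unfolding deq using T unfolding d_def S_def .
  from tendsto_L1_AE_subseq[OF dint this] obtain s where s: "strict_mono s"
    and ae: "AE x in lebesgue_on S. (\<lambda>n. d (s n) x) \<longlonglongrightarrow> 0" by blast
  then obtain N where N: "N \<in> null_sets (lebesgue_on S)"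
    and NN: "{x \<in> space (lebesgue_on S). \<not> (\<lambda>n. d (s n) x) \<longlonglongrightarrow> 0} \<subseteq> N"
    unfolding eventually_ae_filter by blast
  have negN: "negligible (N \<union> {0})"
    using N unfolding S_def by (auto simp: null_sets_restrict_space negligible_iff_null_sets)
  have conv: "(\<lambda>n. d (s n) x) \<longlonglongrightarrow> 0" if "x \<in> S - (N \<union> {0})" for x
    using NN that by (auto simp: S_def)
  have sq0: "(\<lambda>n. f n) \<longlonglongrightarrow> 0" if "\<And>n. (f n)\<^sup>2 \<le> g n" "g \<longlonglongrightarrow> 0" for f g :: "nat \<Rightarrow> real"
  proof -
    have "(\<lambda>n. sqrt (g n)) \<longlonglongrightarrow> 0" using tendsto_real_sqrt[OF that(2)] by simp
    moreover have "norm (f n) \<le> sqrt (g n)" for n using that(1)[of n] real_le_rsqrt by auto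
    ultimately show ?thesis using Lim_null_comparison[of "\<lambda>n. f n" "\<lambda>n. sqrt (g n)"] by auto
  qed
  have cu: "(\<lambda>n. w (s n) x) \<longlonglongrightarrow> u x" and cv: "(\<lambda>n. w' (s n) x) \<longlonglongrightarrow> v x"
    if x: "x \<in> S - (N \<union> {0})" for x
  proof -
    have xp: "x > 0" using x by (auto simp: S_def)
    have g: "(\<lambda>n. x * d (s n) x) \<longlonglongrightarrow> 0" using tendsto_mult_right_zero[OF conv[OF x]] by simp
    have g2: "(\<lambda>n. d (s n) x / x) \<longlonglongrightarrow> 0" using tendsto_divide_zero[OF conv[OF x]] by simp
    have "(\<lambda>n. w (s n) x - u x) \<longlonglongrightarrow> 0"
    proof (rule sq0[OF _ g])
      fix n
      have "(w (s n) x - u x)\<^sup>2 = x * ((w (s n) x - u x)\<^sup>2 / x)" using xp by simp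
      also have "\<dots> \<le> x * d (s n) x" unfolding d_def using xp by (intro mult_left_mono) auto
      finally show "(w (s n) x - u x)\<^sup>2 \<le> x * d (s n) x" .
    qed
    then show "(\<lambda>n. w (s n) x) \<longlonglongrightarrow> u x" by (simp add: LIM_zero_iff)
    have "(\<lambda>n. w' (s n) x - v x) \<longlonglongrightarrow> 0"
    proof (rule sq0[OF _ g2])
      fix n
      have "(w' (s n) x - v x)\<^sup>2 = (x * (w' (s n) x - v x)\<^sup>2) / x" using xp by simp
      also have "\<dots> \<le> d (s n) x / x" unfolding d_def using xp by (intro divide_right_mono) auto
      finally show "(w' (s n) x - v x)\<^sup>2 \<le> d (s n) x / x" .
    qed
    then show "(\<lambda>n. w' (s n) x) \<longlonglongrightarrow> v x" by (simp add: LIM_zero_iff)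
  qed
  have cw: "continuous_on S (w k)" "continuous_on S (w' k)" for k
  proof -
    have "\<forall>r\<in>S. (w k has_real_derivative w' k r) (at r within S)" "continuous_on S (w' k)"
      using C[of k] unfolding C1_van_def S_def by auto
    then show "continuous_on S (w k)" "continuous_on S (w' k)"
      by (auto intro!: DERIV_continuous continuous_at_imp_continuous_on simp: continuous_on_eq_continuous_within)
  qed
  have mw: "w k measurable_on S" "w' k measurable_on S" for k
    using cw[of k] continuous_imp_measurable_on_sets_lebesgue[of S] measurable_on_iff_borel_measurable[of S]
    by (auto simp: S_def)
  have "u measurable_on S" by (rule measurable_on_limit[where f="\<lambda>n. w (s n)", OF mw(1) negN]) (use cu in \<open>auto\<close>)
  moreover have "v measurable_on S" by (rule measurable_on_limit[where f="\<lambda>n. w' (s n)", OF mw(2) negN]) (use cv in \<open>auto\<close>)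
  ultimately show ?thesis unfolding p S_def using measurable_on_iff_borel_measurable[OF sets_lebesgue_Icc] by auto
qed




lemma lip_deriv:
  fixes f f' :: "real \<Rightarrow> real"
  assumes d: "\<And>x. (f has_real_derivative f' x) (at x)" and b: "\<And>x. \<bar>f' x\<bar> \<le> M"
  shows "\<bar>f x - f y\<bar> \<le> M * \<bar>x - y\<bar>"
proof -
  have *: "\<bar>f b - f a\<bar> \<le> M * \<bar>b - a\<bar>" if "a < b" for a b
  proof -
    have "\<exists>z. a < z \<and> z < b \<and> f b - f a = (b - a) * f' z" by (rule MVT2) (use that d in auto)
    then obtain z where "f b - f a = (b - a) * f' z" by blast
    then have "\<bar>f b - f a\<bar> = \<bar>b - a\<bar> * \<bar>f' z\<bar>" by (simp add: abs_mult)
    also have "\<dots> \<le> \<bar>b - a\<bar> * M" using b by (intro mult_left_mono) auto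
    finally show ?thesis by (simp add: mult.commute)
  qed
  consider "x < y" | "x = y" | "y < x" by linarith
  then show ?thesis
  proof cases
    case 1 then show ?thesis using *[OF 1] by (simp add: abs_minus_commute)
  next
    case 3 then show ?thesis using *[OF 3] by simp
  qed simp
qed

lemma taylor2:
  fixes G G' G'' :: "real \<Rightarrow> real"
  assumes d1: "\<And>x. (G has_real_derivative G' x) (at x)"
    and d2: "\<And>x. (G' has_real_derivative G'' x) (at x)" and b: "\<And>x. \<bar>G'' x\<bar> \<le> M"
  shows "\<bar>G (a + h) - G a - G' a * h\<bar> \<le> M * h\<^sup>2"
proof -
  have L: "\<bar>G' x - G' y\<bar> \<le> M * \<bar>x - y\<bar>" for x y by (rule lip_deriv[OF d2 b])
  have M0: "0 \<le> M" using b[of 0] by linarith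
  have key: "\<bar>G (a + h) - G a - G' a * h\<bar> \<le> M * h\<^sup>2"
    if z: "\<bar>z - a\<bar> \<le> \<bar>h\<bar>" "G (a + h) - G a = h * G' z" for z
  proof -
    have e1: "G (a + h) - G a - G' a * h = h * (G' z - G' a)" using z(2) by (simp add: algebra_simps)
    have "\<bar>G' z - G' a\<bar> \<le> M * \<bar>h\<bar>"
    proof -
      have "M * \<bar>z - a\<bar> \<le> M * \<bar>h\<bar>" by (rule mult_left_mono[OF z(1) M0])
      then show ?thesis using L[of z a] by linarith
    qed
    then have "\<bar>h\<bar> * \<bar>G' z - G' a\<bar> \<le> \<bar>h\<bar> * (M * \<bar>h\<bar>)" by (rule mult_left_mono) simp
    moreover have "\<bar>h\<bar> * (M * \<bar>h\<bar>) = M * h\<^sup>2" by (simp add: power2_eq_square abs_mult_self_eq)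
    ultimately show ?thesis unfolding e1 abs_mult by linarith
  qed
  consider "h = 0" | "h > 0" | "h < 0" by linarith
  then show ?thesis
  proof cases
    case 2
    have "\<exists>z. a < z \<and> z < a + h \<and> G (a + h) - G a = (a + h - a) * G' z"
      by (rule MVT2) (use 2 d1 in auto)
    then obtain z where z: "a < z" "z < a + h" "G (a + h) - G a = (a + h - a) * G' z" by blast
    show ?thesis by (rule key[of z]) (use z 2 in auto)
  next
    case 3
    have "\<exists>z. a + h < z \<and> z < a \<and> G a - G (a + h) = (a - (a + h)) * G' z"
      by (rule MVT2) (use 3 d1 in auto)
    then obtain z where z: "a + h < z" "z < a" "G a - G (a + h) = (a - (a + h)) * G' z" by blast
    have "G (a + h) - G a = h * G' z" using z(3) by (simp add: algebra_simps)
    then show ?thesis by (rule key[of z, rotated]) (use z 3 in auto)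
  qed simp
qed

lemma icm: "f integrable_on S \<Longrightarrow> (\<lambda>x. (c::real) * f x) integrable_on S"
  using integrable_on_cmult_left[of f S c] by simp

lemma absprod: "\<bar>(x::real) * y\<bar> \<le> x\<^sup>2 + y\<^sup>2"
proof -
  have "2 * \<bar>x * y\<bar> \<le> x\<^sup>2 + y\<^sup>2"
    using sum_squares_bound[of "\<bar>x\<bar>" "\<bar>y\<bar>"] by (simp add: abs_mult power2_abs)
  moreover have "0 \<le> x\<^sup>2 + y\<^sup>2" by simp
  ultimately show ?thesis by linarith
qed

lemma rsq: "0 \<le> r \<Longrightarrow> r \<le> R \<Longrightarrow> r * (a::real)\<^sup>2 \<le> R\<^sup>2 * (a\<^sup>2 / r)"
proof (cases "r = 0")
  case False
  assume "0 \<le> r" "r \<le> R"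
  then have r: "r > 0" using False by auto
  have "r * a\<^sup>2 = r\<^sup>2 * (a\<^sup>2 / r)" using r by (simp add: power2_eq_square)
  also have "\<dots> \<le> R\<^sup>2 * (a\<^sup>2 / r)" using r \<open>r \<le> R\<close> by (intro mult_right_mono power_mono) auto
  finally show ?thesis .
qed simp

lemma int_bound:
  fixes f g :: "real \<Rightarrow> real"
  assumes "f \<in> borel_measurable (lebesgue_on {0..R})" "g integrable_on {0..R}"
    "\<And>r. r \<in> {0..R} \<Longrightarrow> \<bar>f r\<bar> \<le> g r"
  shows "f integrable_on {0..R}"
  using measurable_bounded_by_integrable_imp_integrable[of f "{0..R}" g] assms by auto

definition Ep :: "hpt \<Rightarrow> real \<Rightarrow> real" where
  "Ep p r = r * (snd p r)\<^sup>2 + (fst p r)\<^sup>2 / r"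

lemma Ep_nonneg: "0 \<le> r \<Longrightarrow> 0 \<le> Ep p r" by (simp add: Ep_def)

lemma Hsp_int:
  assumes "p \<in> Hsp R"
  shows "(\<lambda>r. r * (snd p r)\<^sup>2) integrable_on {0..R}" "(\<lambda>r. (fst p r)\<^sup>2 / r) integrable_on {0..R}"
    "Ep p integrable_on {0..R}"
proof -
  show 1: "(\<lambda>r. r * (snd p r)\<^sup>2) integrable_on {0..R}" "(\<lambda>r. (fst p r)\<^sup>2 / r) integrable_on {0..R}"
    using assms by (auto simp: Hsp_def)
  show "Ep p integrable_on {0..R}" unfolding Ep_def by (rule integrable_add[OF 1])
qed

lemma Hnorm_sq:
  assumes "p \<in> Hsp R"
  shows "Hip R p p = integral {0..R} (Ep p)" "0 \<le> Hip R p p" "(Hnorm R p)\<^sup>2 = integral {0..R} (Ep p)"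
    "0 \<le> Hnorm R p"
proof -
  show 1: "Hip R p p = integral {0..R} (Ep p)"
    unfolding Hip_def Ep_def by (rule integral_cong) (simp add: power2_eq_square)
  show 2: "0 \<le> Hip R p p" unfolding 1
    by (rule integral_nonneg[OF Hsp_int(3)[OF assms]]) (auto simp: Ep_nonneg)
  show "(Hnorm R p)\<^sup>2 = integral {0..R} (Ep p)" using 1 2 by (simp add: Hnorm_def)
  show "0 \<le> Hnorm R p" by (simp add: Hnorm_def 2)
qed

lemma C1_van_scale: "C1_van R w w' \<Longrightarrow> C1_van R (\<lambda>r. t * w r) (\<lambda>r. t * w' r)"
  unfolding C1_van_def by (auto intro!: DERIV_cmult continuous_intros)

lemma pscale_Hsp:
  assumes "p \<in> Hsp R" shows "pscale t p \<in> Hsp R"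
proof -
  obtain u v where p: "p = (u,v)" by (cases p)
  from assms obtain w w' where C: "\<And>k. C1_van R (w k) (w' k)"
    and I: "\<And>k. (\<lambda>r. r * (w' k r - v r)\<^sup>2 + (w k r - u r)\<^sup>2 / r) integrable_on {0..R}"
    and T: "(\<lambda>k. integral {0..R} (\<lambda>r. r * (w' k r - v r)\<^sup>2 + (w k r - u r)\<^sup>2 / r)) \<longlonglongrightarrow> 0"
    and i1: "(\<lambda>r. r * (v r)\<^sup>2) integrable_on {0..R}" and i2: "(\<lambda>r. (u r)\<^sup>2 / r) integrable_on {0..R}"
    unfolding Hsp_def p by auto
  have e: "r * (t * w' k r - t * v r)\<^sup>2 + (t * w k r - t * u r)\<^sup>2 / r
      = t\<^sup>2 * (r * (w' k r - v r)\<^sup>2 + (w k r - u r)\<^sup>2 / r)" for k r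
    by (simp add: power2_eq_square algebra_simps add_divide_distrib diff_divide_distrib)
  have e1: "r * (t * v r)\<^sup>2 = t\<^sup>2 * (r * (v r)\<^sup>2)" for r by (simp add: power2_eq_square)
  have e2: "(t * u r)\<^sup>2 / r = t\<^sup>2 * ((u r)\<^sup>2 / r)" for r by (simp add: power2_eq_square)
  have j1: "(\<lambda>r. r * (t * v r)\<^sup>2) integrable_on {0..R}" unfolding e1 by (rule icm[OF i1])
  have j2: "(\<lambda>r. (t * u r)\<^sup>2 / r) integrable_on {0..R}" unfolding e2 by (rule icm[OF i2])
  have j3: "\<forall>k. C1_van R (\<lambda>r. t * w k r) (\<lambda>r. t * w' k r)" using C C1_van_scale by blast
  have j4: "\<forall>k. (\<lambda>r. r * (t * w' k r - t * v r)\<^sup>2 + (t * w k r - t * u r)\<^sup>2 / r) integrable_on {0..R}"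
    unfolding e using icm[OF I] by blast
  have j5: "(\<lambda>k. integral {0..R} (\<lambda>r. r * (t * w' k r - t * v r)\<^sup>2 + (t * w k r - t * u r)\<^sup>2 / r)) \<longlonglongrightarrow> 0"
    unfolding e integral_mult_right by (rule tendsto_mult_right_zero[OF T])
  have eq: "pscale t p = ((\<lambda>r. t * u r), (\<lambda>r. t * v r))" by (simp add: p pscale_def)
  show ?thesis unfolding eq Hsp_def mem_Collect_eq case_prod_conv
    apply (intro conjI j1 j2)
    apply (rule exI[of _ "\<lambda>k r. t * w k r"], rule exI[of _ "\<lambda>k r. t * w' k r"])
    using j3 j4 j5 by simp
qed

lemma Hnorm_pscale:
  assumes "p \<in> Hsp R" shows "Hnorm R (pscale t p) = \<bar>t\<bar> * Hnorm R p"
proof -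
  have "Hip R (pscale t p) (pscale t p) = t\<^sup>2 * Hip R p p"
  proof -
    have "\<And>r. r * (t * snd p r) * (t * snd p r) + t * fst p r * (t * fst p r) / r
       = t\<^sup>2 * (r * snd p r * snd p r + fst p r * fst p r / r)"
      by (simp add: power2_eq_square algebra_simps add_divide_distrib)
    then show ?thesis unfolding Hip_def pscale_def by simp
  qed
  then show ?thesis unfolding Hnorm_def by (simp add: real_sqrt_mult)
qed

lemma bounded_trick:
  assumes hom: "\<And>q t. q \<in> Hsp R \<Longrightarrow> L (pscale t q) = t * L q"
    and bd: "\<And>q. q \<in> Hsp R \<Longrightarrow> \<bar>L q\<bar> \<le> A + B * (Hnorm R q)\<^sup>2" and A: "0 \<le> A" and B: "0 \<le> B"
  shows "\<exists>C. \<forall>q\<in>Hsp R. \<bar>L q\<bar> \<le> C * Hnorm R q"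
proof (intro exI ballI)
  fix q assume q: "q \<in> Hsp R"
  have h0: "0 \<le> Hnorm R q" using Hnorm_sq(4)[OF q] .
  show "\<bar>L q\<bar> \<le> (A + B) * Hnorm R q"
  proof (cases "Hnorm R q = 0")
    case True
    have "\<bar>L q\<bar> \<le> A / t" if t: "t > 0" for t
    proof -
      have "t * \<bar>L q\<bar> = \<bar>L (pscale t q)\<bar>" using hom[OF q, of t] t by (simp add: abs_mult)
      also have "\<dots> \<le> A" using bd[OF pscale_Hsp[OF q, of t]] Hnorm_pscale[OF q, of t] True by simp
      finally have "\<bar>L q\<bar> * t \<le> A" by (simp add: mult.commute)
      then show ?thesis by (subst pos_le_divide_eq[OF t])
    qed
    then have "\<bar>L q\<bar> \<le> 0"
    proof -
      have "(\<lambda>n. A * (1 / real (Suc n))) \<longlonglongrightarrow> 0"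
        by (rule tendsto_mult_right_zero[OF LIMSEQ_Suc[OF lim_inverse_n']])
      moreover have "\<forall>n. \<bar>L q\<bar> \<le> A * (1 / real (Suc n))"
      proof
        fix n :: nat show "\<bar>L q\<bar> \<le> A * (1 / real (Suc n))"
          using \<open>\<And>t. t > 0 \<Longrightarrow> _\<close>[of "real (Suc n)"] by simp
      qed
      ultimately show ?thesis by (meson LIMSEQ_le_const)
    qed
    then show ?thesis using True by simp
  next
    case False
    then have hp: "Hnorm R q > 0" using h0 by simp
    define t where "t = 1 / Hnorm R q"
    have "\<bar>L (pscale t q)\<bar> \<le> A + B" using bd[OF pscale_Hsp[OF q, of t]] Hnorm_pscale[OF q, of t] hp
      by (simp add: t_def)
    moreover have "L (pscale t q) = L q / Hnorm R q" using hom[OF q, of t] by (simp add: t_def)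
    ultimately have "\<bar>L q\<bar> / Hnorm R q \<le> A + B" using hp by (simp add: abs_div)
    then show ?thesis by (subst (asm) pos_divide_le_eq[OF hp])
  qed
qed

lemma deriv_unique:
  assumes "has_H_deriv R F p L1" "has_H_deriv R F p L2" "q \<in> Hsp R"
  shows "L1 q = L2 q"
proof -
  have D1: "Hdual R L1" and D2: "Hdual R L2" using assms(1,2) unfolding has_H_deriv_def by simp_all
  have hom1: "L1 (pscale t q) = t * L1 q" and hom2: "L2 (pscale t q) = t * L2 q" for t
    using D1[unfolded Hdual_def, THEN conjunct2, THEN conjunct1, rule_format, OF assms(3)]
      D2[unfolded Hdual_def, THEN conjunct2, THEN conjunct1, rule_format, OF assms(3)] by simp_all
  have E1: "\<forall>\<epsilon>>0. \<exists>\<delta>>0. \<forall>q\<in>Hsp R. Hnorm R q < \<delta> \<longrightarrow> \<bar>F (padd p q) - F p - L1 q\<bar> \<le> \<epsilon> * Hnorm R q"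
    using assms(1) unfolding has_H_deriv_def by simp
  have E2: "\<forall>\<epsilon>>0. \<exists>\<delta>>0. \<forall>q\<in>Hsp R. Hnorm R q < \<delta> \<longrightarrow> \<bar>F (padd p q) - F p - L2 q\<bar> \<le> \<epsilon> * Hnorm R q"
    using assms(2) unfolding has_H_deriv_def by simp
  have h0: "0 \<le> Hnorm R q" using Hnorm_sq(4)[OF assms(3)] .
  have bound: "\<bar>L1 q - L2 q\<bar> \<le> 2 * e * Hnorm R q" if e: "e > 0" for e
  proof -
    obtain d1 where d1: "d1 > 0" "\<forall>q\<in>Hsp R. Hnorm R q < d1 \<longrightarrow> \<bar>F (padd p q) - F p - L1 q\<bar> \<le> e * Hnorm R q"
      using E1[rule_format, OF e] by (elim exE conjE) simp
    obtain d2 where d2: "d2 > 0" "\<forall>q\<in>Hsp R. Hnorm R q < d2 \<longrightarrow> \<bar>F (padd p q) - F p - L2 q\<bar> \<le> e * Hnorm R q"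
      using E2[rule_format, OF e] by (elim exE conjE) simp
    define t where "t = min d1 d2 / (2 * (Hnorm R q + 1))"
    have t: "t > 0" using d1 d2 h0 by (simp add: t_def)
    have tn: "Hnorm R (pscale t q) = t * Hnorm R q" using Hnorm_pscale[OF assms(3), of t] t by simp
    have "t * Hnorm R q \<le> t * (Hnorm R q + 1)" using t by simp
    also have "t * (Hnorm R q + 1) = min d1 d2 / 2" using h0 by (simp add: t_def field_simps)
    finally have n: "Hnorm R (pscale t q) < d1" "Hnorm R (pscale t q) < d2" unfolding tn using d1(1) d2(1) by linarith+
    have qs: "pscale t q \<in> Hsp R" by (rule pscale_Hsp[OF assms(3)])
    have a1: "\<bar>F (padd p (pscale t q)) - F p - L1 (pscale t q)\<bar> \<le> e * Hnorm R (pscale t q)"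
      by (rule d1(2)[rule_format, OF qs n(1)])
    have a2: "\<bar>F (padd p (pscale t q)) - F p - L2 (pscale t q)\<bar> \<le> e * Hnorm R (pscale t q)"
      by (rule d2(2)[rule_format, OF qs n(2)])
    have "\<bar>L1 (pscale t q) - L2 (pscale t q)\<bar> \<le> 2 * e * Hnorm R (pscale t q)"
      using a1 a2 by linarith
    moreover have "\<bar>L1 (pscale t q) - L2 (pscale t q)\<bar> = t * \<bar>L1 q - L2 q\<bar>"
    proof -
      have "L1 (pscale t q) - L2 (pscale t q) = t * (L1 q - L2 q)" unfolding hom1 hom2 by (simp add: right_diff_distrib)
      then show ?thesis using t by (simp add: abs_mult)
    qed
    ultimately have "t * \<bar>L1 q - L2 q\<bar> \<le> t * (2 * e * Hnorm R q)" unfolding tn by (simp add: mult_ac)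
    then show ?thesis using t by simp
  qed
  have lim: "(\<lambda>n. 2 * (1 / real (Suc n)) * Hnorm R q) \<longlonglongrightarrow> 0"
    using tendsto_mult[OF tendsto_mult[OF tendsto_const LIMSEQ_Suc[OF lim_inverse_n']] tendsto_const, of 2 "Hnorm R q"]
    by simp
  have "\<bar>L1 q - L2 q\<bar> \<le> 0"
  proof (rule LIMSEQ_le_const[OF lim], intro exI allI impI)
    fix n :: nat show "\<bar>L1 q - L2 q\<bar> \<le> 2 * (1 / real (Suc n)) * Hnorm R q"
      using bound[of "1 / real (Suc n)"] by simp
  qed
  then show ?thesis by simp
qed




definition JF :: "real \<Rightarrow> real \<Rightarrow> real \<Rightarrow> (real \<Rightarrow> real) \<Rightarrow> hpt \<Rightarrow> real" where
  "JF c b R G p = 1/2 * integral {0..R} (\<lambda>r. r * (snd p r)\<^sup>2 + c / r * (fst p r)\<^sup>2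
      - 2 * b * r * (fst p r)\<^sup>2 + 2 * r * G (fst p r))"

definition JD :: "real \<Rightarrow> real \<Rightarrow> real \<Rightarrow> (real \<Rightarrow> real) \<Rightarrow> hpt \<Rightarrow> hpt \<Rightarrow> real" where
  "JD c b R G' p q = integral {0..R} (\<lambda>r. r * snd p r * snd q r + c / r * fst p r * fst q r
      - 2 * b * r * fst p r * fst q r + r * G' (fst p r) * fst q r)"

lemma abs4: "\<bar>(a::real) + b - c + d\<bar> \<le> \<bar>a\<bar> + \<bar>b\<bar> + \<bar>c\<bar> + \<bar>d\<bar>" by linarith

lemma ptw_B1:
  fixes r R c b M u v uq vq :: real
  assumes r: "0 \<le> r" "r \<le> R" and M: "0 \<le> M" and g: "\<bar>g\<bar> \<le> M * \<bar>u\<bar>"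
  defines "K \<equiv> \<bar>c\<bar> + 2 * \<bar>b\<bar> * R\<^sup>2 + 2 * M * R\<^sup>2 + 1"
  shows "\<bar>r * v * vq + c / r * u * uq - 2 * b * r * u * uq + r * g * uq\<bar>
     \<le> K * ((r * v\<^sup>2 + u\<^sup>2 / r) + (r * vq\<^sup>2 + uq\<^sup>2 / r))"
proof -
  define U where "U = u\<^sup>2 / r + uq\<^sup>2 / r"
  define V where "V = r * v\<^sup>2 + r * vq\<^sup>2"
  have U0: "0 \<le> U" "0 \<le> V" using r by (auto simp: U_def V_def)
  have t1: "\<bar>r * v * vq\<bar> \<le> V"
  proof -
    have "\<bar>r * v * vq\<bar> = r * \<bar>v * vq\<bar>" using r by (simp add: abs_mult)
    also have "\<dots> \<le> r * (v\<^sup>2 + vq\<^sup>2)" using r absprod by (intro mult_left_mono) auto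
    finally show ?thesis by (simp add: V_def algebra_simps)
  qed
  have t2: "\<bar>c / r * u * uq\<bar> \<le> \<bar>c\<bar> * U"
  proof -
    have "\<bar>c / r * u * uq\<bar> = \<bar>c\<bar> * (\<bar>u * uq\<bar> / r)" using r by (simp add: abs_mult)
    also have "\<dots> \<le> \<bar>c\<bar> * ((u\<^sup>2 + uq\<^sup>2) / r)" using r absprod
      by (intro mult_left_mono divide_right_mono) auto
    finally show ?thesis by (simp add: U_def add_divide_distrib)
  qed
  have rU: "r * (u\<^sup>2 + uq\<^sup>2) \<le> R\<^sup>2 * U"
    using rsq[OF r, of u] rsq[OF r, of uq] by (simp add: U_def algebra_simps)
  have t3: "\<bar>2 * b * r * u * uq\<bar> \<le> 2 * \<bar>b\<bar> * R\<^sup>2 * U"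
  proof -
    have "\<bar>2 * b * r * u * uq\<bar> = 2 * \<bar>b\<bar> * (r * \<bar>u * uq\<bar>)" using r by (simp add: abs_mult)
    also have "\<dots> \<le> 2 * \<bar>b\<bar> * (r * (u\<^sup>2 + uq\<^sup>2))" using r absprod
      by (intro mult_left_mono) auto
    also have "\<dots> \<le> 2 * \<bar>b\<bar> * (R\<^sup>2 * U)" using rU by (intro mult_left_mono) auto
    finally show ?thesis by simp
  qed
  have t4: "\<bar>r * g * uq\<bar> \<le> M * R\<^sup>2 * U"
  proof -
    have "\<bar>r * g * uq\<bar> = r * (\<bar>g\<bar> * \<bar>uq\<bar>)" using r by (simp add: abs_mult)
    also have "\<dots> \<le> r * ((M * \<bar>u\<bar>) * \<bar>uq\<bar>)" using r g by (intro mult_left_mono mult_right_mono) auto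
    also have "\<dots> = M * (r * \<bar>u * uq\<bar>)" by (simp add: abs_mult)
    also have "\<dots> \<le> M * (r * (u\<^sup>2 + uq\<^sup>2))" using r M absprod by (intro mult_left_mono) auto
    also have "\<dots> \<le> M * (R\<^sup>2 * U)" using rU M by (intro mult_left_mono) auto
    finally show ?thesis by simp
  qed
  have "\<bar>r * v * vq + c / r * u * uq - 2 * b * r * u * uq + r * g * uq\<bar>
      \<le> V + (\<bar>c\<bar> + 2 * \<bar>b\<bar> * R\<^sup>2 + M * R\<^sup>2) * U"
  proof -
    have e: "V + (\<bar>c\<bar> + 2 * \<bar>b\<bar> * R\<^sup>2 + M * R\<^sup>2) * U = V + \<bar>c\<bar> * U + 2 * \<bar>b\<bar> * R\<^sup>2 * U + M * R\<^sup>2 * U"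
      by (simp add: algebra_simps)
    have "\<bar>r * v * vq + c / r * u * uq - 2 * b * r * u * uq + r * g * uq\<bar> \<le>
       \<bar>r * v * vq\<bar> + \<bar>c / r * u * uq\<bar> + \<bar>2 * b * r * u * uq\<bar> + \<bar>r * g * uq\<bar>" by linarith
    then show ?thesis unfolding e using t1 t2 t3 t4 by linarith
  qed
  also have "\<dots> \<le> K * V + K * U"
  proof -
    have "V \<le> K * V" using U0 M by (simp add: K_def mult_le_cancel_right1)
    moreover have "(\<bar>c\<bar> + 2 * \<bar>b\<bar> * R\<^sup>2 + M * R\<^sup>2) * U \<le> K * U"
      using U0 M by (intro mult_right_mono) (auto simp: K_def)
    ultimately show ?thesis by linarith
  qed
  also have "\<dots> = K * ((r * v\<^sup>2 + u\<^sup>2 / r) + (r * vq\<^sup>2 + uq\<^sup>2 / r))"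
    by (simp add: U_def V_def algebra_simps)
  finally show ?thesis .
qed

lemma ptw_B3:
  fixes r R c b M uq vq d :: real
  assumes r: "0 \<le> r" "r \<le> R" and M: "0 \<le> M" and g: "\<bar>d\<bar> \<le> M * uq\<^sup>2"
  defines "K \<equiv> \<bar>c\<bar> + 2 * \<bar>b\<bar> * R\<^sup>2 + 2 * M * R\<^sup>2 + 1"
  shows "\<bar>r * vq\<^sup>2 + c / r * uq\<^sup>2 - 2 * b * r * uq\<^sup>2 + 2 * r * d\<bar> \<le> K * (r * vq\<^sup>2 + uq\<^sup>2 / r)"
proof -
  define U where "U = uq\<^sup>2 / r"
  define V where "V = r * vq\<^sup>2"
  have U0: "0 \<le> U" "0 \<le> V" using r by (auto simp: U_def V_def)
  have t1: "\<bar>r * vq\<^sup>2\<bar> \<le> V" using r by (simp add: V_def)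
  have t2: "\<bar>c / r * uq\<^sup>2\<bar> \<le> \<bar>c\<bar> * U" using r by (simp add: U_def abs_mult)
  have rU: "r * uq\<^sup>2 \<le> R\<^sup>2 * U" using rsq[OF r, of uq] by (simp add: U_def)
  have t3: "\<bar>2 * b * r * uq\<^sup>2\<bar> \<le> 2 * \<bar>b\<bar> * R\<^sup>2 * U"
  proof -
    have "\<bar>2 * b * r * uq\<^sup>2\<bar> = 2 * \<bar>b\<bar> * (r * uq\<^sup>2)" using r by (simp add: abs_mult)
    also have "\<dots> \<le> 2 * \<bar>b\<bar> * (R\<^sup>2 * U)" using rU by (intro mult_left_mono) auto
    finally show ?thesis by simp
  qed
  have t4: "\<bar>2 * r * d\<bar> \<le> 2 * M * R\<^sup>2 * U"
  proof -
    have "\<bar>2 * r * d\<bar> = 2 * (r * \<bar>d\<bar>)" using r by (simp add: abs_mult)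
    also have "\<dots> \<le> 2 * (r * (M * uq\<^sup>2))" using r g by (intro mult_left_mono) auto
    also have "\<dots> = 2 * M * (r * uq\<^sup>2)" by simp
    also have "\<dots> \<le> 2 * M * (R\<^sup>2 * U)" using rU M by (intro mult_left_mono) auto
    finally show ?thesis by simp
  qed
  have "\<bar>r * vq\<^sup>2 + c / r * uq\<^sup>2 - 2 * b * r * uq\<^sup>2 + 2 * r * d\<bar>
      \<le> V + (\<bar>c\<bar> + 2 * \<bar>b\<bar> * R\<^sup>2 + 2 * M * R\<^sup>2) * U"
  proof -
    have e: "V + (\<bar>c\<bar> + 2 * \<bar>b\<bar> * R\<^sup>2 + 2 * M * R\<^sup>2) * U = V + \<bar>c\<bar> * U + 2 * \<bar>b\<bar> * R\<^sup>2 * U + 2 * M * R\<^sup>2 * U"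
      by (simp add: algebra_simps)
    have "\<bar>r * vq\<^sup>2 + c / r * uq\<^sup>2 - 2 * b * r * uq\<^sup>2 + 2 * r * d\<bar> \<le>
       \<bar>r * vq\<^sup>2\<bar> + \<bar>c / r * uq\<^sup>2\<bar> + \<bar>2 * b * r * uq\<^sup>2\<bar> + \<bar>2 * r * d\<bar>" by (rule abs4)
    then show ?thesis unfolding e using t1 t2 t3 t4 by linarith
  qed
  also have "\<dots> \<le> K * V + K * U"
  proof -
    have "V \<le> K * V" using U0 M by (simp add: K_def mult_le_cancel_right1)
    moreover have "(\<bar>c\<bar> + 2 * \<bar>b\<bar> * R\<^sup>2 + 2 * M * R\<^sup>2) * U \<le> K * U"
      using U0 M by (intro mult_right_mono) (auto simp: K_def)
    ultimately show ?thesis by linarith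
  qed
  also have "\<dots> = K * (r * vq\<^sup>2 + uq\<^sup>2 / r)" by (simp add: U_def V_def algebra_simps)
  finally show ?thesis .
qed




lemma mid: "(\<lambda>x::real. x) \<in> borel_measurable (lebesgue_on {0..R})"
  by (rule continuous_imp_measurable_on_sets_lebesgue[OF continuous_on_id]) simp

lemmas mrules = borel_measurable_add borel_measurable_diff borel_measurable_times
  borel_measurable_divide borel_measurable_power borel_measurable_const

lemma FD_alg:
  fixes r d b v vq u uq Gs Gu g :: real
  shows "r * (v + vq)\<^sup>2 + d * (u + uq)\<^sup>2 - 2 * b * r * (u + uq)\<^sup>2 + 2 * r * Gs =
    (r * v\<^sup>2 + d * u\<^sup>2 - 2 * b * r * u\<^sup>2 + 2 * r * Gu)
    + 2 * (r * v * vq + d * u * uq - 2 * b * r * u * uq + r * g * uq)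
    + (r * vq\<^sup>2 + d * uq\<^sup>2 - 2 * b * r * uq\<^sup>2 + 2 * r * (Gs - Gu - g * uq))"
  by (simp add: power2_eq_square algebra_simps)

lemma JF_deriv:
  fixes c b M R :: real and G G' :: "real \<Rightarrow> real"
  assumes R: "R > 0" and p: "p \<in> Hsp R"
    and Gc: "continuous_on UNIV G" and G'c: "continuous_on UNIV G'"
    and M: "0 \<le> M" and tay: "\<And>a h. \<bar>G (a + h) - G a - G' a * h\<bar> \<le> M * h\<^sup>2"
    and G'b: "\<And>a. \<bar>G' a\<bar> \<le> M * \<bar>a\<bar>" and G0: "G 0 = 0"
  shows "has_H_deriv R (JF c b R G) p (JD c b R G' p)"
proof -
  define S where "S = {0..R}"
  define K where "K = \<bar>c\<bar> + 2 * \<bar>b\<bar> * R\<^sup>2 + 2 * M * R\<^sup>2 + 1"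
  have K: "K > 0"
  proof -
    have "0 \<le> \<bar>c\<bar> + 2 * \<bar>b\<bar> * R\<^sup>2 + 2 * M * R\<^sup>2" using M by simp
    then show ?thesis by (simp add: K_def)
  qed
  note GM = measurable_compose[OF _ borel_measurable_continuous_onI[OF Gc]]
    measurable_compose[OF _ borel_measurable_continuous_onI[OF G'c]]
  have mid: "(\<lambda>x::real. x) \<in> borel_measurable (lebesgue_on S)" using mid by (simp add: S_def)
  have mp: "fst p \<in> borel_measurable (lebesgue_on S)" "snd p \<in> borel_measurable (lebesgue_on S)"
    using Hsp_meas[OF p] by (auto simp: S_def)
  have intb: "\<And>f g :: real \<Rightarrow> real. f \<in> borel_measurable (lebesgue_on S) \<Longrightarrow> g integrable_on S \<Longrightarrow>
      (\<And>r. r \<in> S \<Longrightarrow> \<bar>f r\<bar> \<le> g r) \<Longrightarrow> f integrable_on S"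
    unfolding S_def by (rule int_bound)
  define k where "k q r = r * snd p r * snd q r + c / r * fst p r * fst q r
      - 2 * b * r * fst p r * fst q r + r * G' (fst p r) * fst q r" for q r
  have JDk: "JD c b R G' p q = integral S (k q)" for q
    unfolding JD_def S_def by (rule integral_cong) (simp add: k_def)
  have Gb: "\<bar>G a\<bar> \<le> M * a\<^sup>2" for a
  proof -
    have "G' 0 = 0" using G'b[of 0] by simp
    then show ?thesis using tay[of 0 a] G0 by simp
  qed
  have kint: "k q integrable_on S" and kbd: "\<And>r. r \<in> S \<Longrightarrow> \<bar>k q r\<bar> \<le> K * (Ep p r + Ep q r)"
    if q: "q \<in> Hsp R" for q
  proof -
    have mq: "fst q \<in> borel_measurable (lebesgue_on S)" "snd q \<in> borel_measurable (lebesgue_on S)"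
      using Hsp_meas[OF q] by (auto simp: S_def)
    show b: "\<bar>k q r\<bar> \<le> K * (Ep p r + Ep q r)" if "r \<in> S" for r
    proof -
      have r: "0 \<le> r" "r \<le> R" using that by (auto simp: S_def)
      show ?thesis unfolding k_def K_def Ep_def by (rule ptw_B1[OF r M G'b])
    qed
    have m: "k q \<in> borel_measurable (lebesgue_on S)" unfolding k_def by (rule mrules mid mp mq GM)+
    have i: "(\<lambda>r. K * (Ep p r + Ep q r)) integrable_on S"
      using icm[OF integrable_add[OF Hsp_int(3)[OF p] Hsp_int(3)[OF q]]] by (simp add: S_def)
    show "k q integrable_on S" by (rule intb[OF m i b])
  qed
  have hom: "JD c b R G' p (pscale t q) = t * JD c b R G' p q" for t q
  proof -
    have "k (pscale t q) = (\<lambda>r. t * k q r)" by (rule ext) (simp add: k_def pscale_def algebra_simps)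
    then show ?thesis unfolding JDk by simp
  qed
  have add: "JD c b R G' p (padd q1 q2) = JD c b R G' p q1 + JD c b R G' p q2"
    if "q1 \<in> Hsp R" "q2 \<in> Hsp R" for q1 q2
  proof -
    have "k (padd q1 q2) = (\<lambda>r. k q1 r + k q2 r)" by (rule ext) (simp add: k_def padd_def algebra_simps add_divide_distrib)
    then show ?thesis unfolding JDk using integral_add[OF kint[OF that(1)] kint[OF that(2)]] by simp
  qed
  have bnd: "\<bar>JD c b R G' p q\<bar> \<le> K * (Hnorm R p)\<^sup>2 + K * (Hnorm R q)\<^sup>2" if q: "q \<in> Hsp R" for q
  proof -
    have Ip: "Ep p integrable_on S" and Iq: "Ep q integrable_on S"
      using Hsp_int(3)[OF p] Hsp_int(3)[OF q] by (simp_all add: S_def)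
    have IK: "(\<lambda>r. K * (Ep p r + Ep q r)) integrable_on S" by (rule icm[OF integrable_add[OF Ip Iq]])
    have "norm (integral S (k q)) \<le> integral S (\<lambda>r. K * (Ep p r + Ep q r))"
      by (rule integral_norm_bound_integral[OF kint[OF q] IK]) (use kbd[OF q] in simp)
    also have "integral S (\<lambda>r. K * (Ep p r + Ep q r)) = K * integral S (\<lambda>r. Ep p r + Ep q r)"
      by (rule integral_mult_right)
    also have "integral S (\<lambda>r. Ep p r + Ep q r) = integral S (Ep p) + integral S (Ep q)"
      by (rule integral_add[OF Ip Iq])
    also have "integral S (Ep p) + integral S (Ep q) = (Hnorm R p)\<^sup>2 + (Hnorm R q)\<^sup>2"
      using Hnorm_sq(3)[OF p] Hnorm_sq(3)[OF q] by (simp add: S_def)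
    finally have "\<bar>integral S (k q)\<bar> \<le> K * ((Hnorm R p)\<^sup>2 + (Hnorm R q)\<^sup>2)" by simp
    then show ?thesis unfolding JDk by (simp add: distrib_left)
  qed
  have dual: "Hdual R (JD c b R G' p)"
  proof -
    have a: "\<forall>q1\<in>Hsp R. \<forall>q2\<in>Hsp R. JD c b R G' p (padd q1 q2) = JD c b R G' p q1 + JD c b R G' p q2"
      using add by simp
    have h: "\<forall>q\<in>Hsp R. \<forall>t. JD c b R G' p (pscale t q) = t * JD c b R G' p q" using hom by simp
    have A0: "0 \<le> K * (Hnorm R p)\<^sup>2" and K0: "0 \<le> K" using K by auto
    have h1: "\<And>q t. q \<in> Hsp R \<Longrightarrow> JD c b R G' p (pscale t q) = t * JD c b R G' p q" using hom by simp
    have "\<exists>C. \<forall>q\<in>Hsp R. \<bar>JD c b R G' p q\<bar> \<le> C * Hnorm R q"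
      by (rule bounded_trick[OF h1 bnd A0 K0])
    with a h show ?thesis unfolding Hdual_def by (intro conjI)
  qed
  define F where "F q r = r * (snd q r)\<^sup>2 + c / r * (fst q r)\<^sup>2 - 2 * b * r * (fst q r)\<^sup>2 + 2 * r * G (fst q r)" for q r
  have JFF: "JF c b R G q = 1/2 * integral S (F q)" for q
    unfolding JF_def S_def by (rule arg_cong[where f="\<lambda>x. 1/2 * x"], rule integral_cong) (simp add: F_def)
  have Fpint: "F p integrable_on S"
  proof -
    have "\<bar>F p r\<bar> \<le> K * Ep p r" if "r \<in> S" for r
    proof -
      have r: "0 \<le> r" "r \<le> R" using that by (auto simp: S_def)
      show ?thesis unfolding F_def K_def Ep_def by (rule ptw_B3[OF r M Gb])
    qed
    note b = this
    have m: "F p \<in> borel_measurable (lebesgue_on S)" unfolding F_def by (rule mrules mid mp GM)+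
    have i: "(\<lambda>r. K * Ep p r) integrable_on S" using icm[OF Hsp_int(3)[OF p]] by (simp add: S_def)
    show ?thesis by (rule intb[OF m i b])
  qed
  have rem: "\<bar>JF c b R G (padd p q) - JF c b R G p - JD c b R G' p q\<bar> \<le> K / 2 * (Hnorm R q)\<^sup>2"
    if q: "q \<in> Hsp R" for q
  proof -
    have mq: "fst q \<in> borel_measurable (lebesgue_on S)" "snd q \<in> borel_measurable (lebesgue_on S)"
      using Hsp_meas[OF q] by (auto simp: S_def)
    define D where "D r = r * (snd q r)\<^sup>2 + c / r * (fst q r)\<^sup>2 - 2 * b * r * (fst q r)\<^sup>2
       + 2 * r * (G (fst p r + fst q r) - G (fst p r) - G' (fst p r) * fst q r)" for r
    have Dbd: "\<bar>D r\<bar> \<le> K * Ep q r" if "r \<in> S" for r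
    proof -
      have r: "0 \<le> r" "r \<le> R" using that by (auto simp: S_def)
      show ?thesis unfolding D_def K_def Ep_def by (rule ptw_B3[OF r M tay])
    qed
    have m: "D \<in> borel_measurable (lebesgue_on S)" unfolding D_def by (rule mrules mid mp mq GM)+
    have i: "(\<lambda>r. K * Ep q r) integrable_on S" using icm[OF Hsp_int(3)[OF q]] by (simp add: S_def)
    have Dint: "D integrable_on S" by (rule intb[OF m i Dbd])
    have FD: "F (padd p q) r = F p r + 2 * k q r + D r" for r
        unfolding F_def k_def D_def padd_def fst_conv snd_conv by (rule FD_alg)
    have "integral S (F (padd p q)) = integral S (F p) + 2 * integral S (k q) + integral S D"
      unfolding FD using integral_add[OF integrable_add[OF Fpint icm[OF kint[OF q]]] Dint]
        integral_add[OF Fpint icm[OF kint[OF q]]] by simp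
    then have "JF c b R G (padd p q) - JF c b R G p - JD c b R G' p q = 1/2 * integral S D"
      unfolding JFF JDk by linarith
    moreover have "\<bar>integral S D\<bar> \<le> K * (Hnorm R q)\<^sup>2"
    proof -
      have IK: "(\<lambda>r. K * Ep q r) integrable_on S" using icm[OF Hsp_int(3)[OF q]] by (simp add: S_def)
      have "norm (integral S D) \<le> integral S (\<lambda>r. K * Ep q r)"
        by (rule integral_norm_bound_integral[OF Dint IK]) (use Dbd in simp)
      then have "\<bar>integral S D\<bar> \<le> integral S (\<lambda>r. K * Ep q r)" by simp
      also have "\<dots> = K * (Hnorm R q)\<^sup>2" using Hnorm_sq(3)[OF q] by (simp add: S_def)
      finally show ?thesis .
    qed
    moreover have "K / 2 * (Hnorm R q)\<^sup>2 = (K * (Hnorm R q)\<^sup>2) / 2" by simp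
    ultimately show ?thesis by linarith
  qed
  show ?thesis unfolding has_H_deriv_def
  proof (intro conjI dual allI impI)
    fix e :: real assume e: "e > 0"
    show "\<exists>\<delta>>0. \<forall>q\<in>Hsp R. Hnorm R q < \<delta> \<longrightarrow>
        \<bar>JF c b R G (padd p q) - JF c b R G p - JD c b R G' p q\<bar> \<le> e * Hnorm R q"
    proof (intro exI[of _ "2 * e / K"] conjI ballI impI)
      show "0 < 2 * e / K" using e K by simp
      fix q assume q: "q \<in> Hsp R" and h: "Hnorm R q < 2 * e / K"
      have h0: "0 \<le> Hnorm R q" using Hnorm_sq(4)[OF q] .
      have "K / 2 * (Hnorm R q)\<^sup>2 = (K / 2 * Hnorm R q) * Hnorm R q" by (simp add: power2_eq_square)
      also have "\<dots> \<le> e * Hnorm R q"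
      proof (rule mult_right_mono[OF _ h0])
        show "K / 2 * Hnorm R q \<le> e" using h K by (simp add: field_simps)
      qed
      finally show "\<bar>JF c b R G (padd p q) - JF c b R G p - JD c b R G' p q\<bar> \<le> e * Hnorm R q"
        using rem[OF q] by linarith
    qed
  qed
qed




lemma powi_m2: "(a::real) powi (-2) = 1 / a\<^sup>2"
  by (simp add: power_int_minus divide_inverse)

lemma dGI:
  fixes a :: real assumes a: "a > 0"
  shows "((\<lambda>s. a powi (-2) * ln (1 + a * s\<^sup>2)) has_real_derivative (2 * x / (a * (1 + a * x\<^sup>2)))) (at x)"
proof -
  have p: "1 + a * x\<^sup>2 > 0" using a by (simp add: add_pos_nonneg)
  show ?thesis unfolding powi_m2
    by (rule derivative_eq_intros refl | use p a in \<open>simp add: field_simps power2_eq_square\<close>)+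
qed

lemma dGG:
  fixes a :: real assumes a: "a > 0"
  shows "((\<lambda>s. 1 / a * s\<^sup>2 / (1 + a * s\<^sup>2)) has_real_derivative (2 * x / (a * (1 + a * x\<^sup>2)\<^sup>2))) (at x)"
proof -
  have p: "1 + a * x\<^sup>2 > 0" using a by (simp add: add_pos_nonneg)
  show ?thesis
    by (rule derivative_eq_intros refl | use p a in \<open>simp add: field_simps power2_eq_square\<close>)+
qed




lemma dGI':
  fixes a :: real assumes a: "a > 0"
  shows "((\<lambda>s. 2 * s / (a * (1 + a * s\<^sup>2))) has_real_derivative (2 * (1 - a * x\<^sup>2) / (a * (1 + a * x\<^sup>2)\<^sup>2))) (at x)"
proof -
  have p: "1 + a * x\<^sup>2 > 0" using a by (simp add: add_pos_nonneg)
  have d1: "((\<lambda>s. 2 * s) has_real_derivative 2) (at x)" by (auto intro!: derivative_eq_intros)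
  have d2: "((\<lambda>s. a * (1 + a * s\<^sup>2)) has_real_derivative (a * (a * (2 * x)))) (at x)"
    by (auto intro!: derivative_eq_intros)
  have eq: "(2 * (a * (1 + a * x\<^sup>2)) - 2 * x * (a * (a * (2 * x)))) / (a * (1 + a * x\<^sup>2) * (a * (1 + a * x\<^sup>2)))
     = 2 * (1 - a * x\<^sup>2) / (a * (1 + a * x\<^sup>2)\<^sup>2)"
  proof -
    define y where "y = 1 + a * x\<^sup>2"
    have y: "y > 0" using p by (simp add: y_def)
    have n: "2 * (a * y) - 2 * x * (a * (a * (2 * x))) = 2 * a * (1 - a * x\<^sup>2)"
      by (simp add: y_def power2_eq_square algebra_simps)
    have "(2 * (a * y) - 2 * x * (a * (a * (2 * x)))) / (a * y * (a * y)) = 2 * a * (1 - a * x\<^sup>2) / (a * (a * y\<^sup>2))"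
      unfolding n by (simp add: power2_eq_square mult_ac)
    also have "\<dots> = 2 * (1 - a * x\<^sup>2) / (a * y\<^sup>2)" using a y by simp
    finally show ?thesis unfolding y_def .
  qed
  show ?thesis using DERIV_divide[OF d1 d2] a p unfolding eq by simp
qed
lemma dGG':
  fixes a :: real assumes a: "a > 0"
  shows "((\<lambda>s. 2 * s / (a * (1 + a * s\<^sup>2)\<^sup>2)) has_real_derivative (2 * (1 - 3 * a * x\<^sup>2) / (a * (1 + a * x\<^sup>2) ^ 3))) (at x)"
proof -
  have p: "1 + a * x\<^sup>2 > 0" using a by (simp add: add_pos_nonneg)
  have d1: "((\<lambda>s. 2 * s) has_real_derivative 2) (at x)" by (auto intro!: derivative_eq_intros)
  have d2: "((\<lambda>s. a * (1 + a * s\<^sup>2)\<^sup>2) has_real_derivative (a * (2 * (1 + a * x\<^sup>2) * (a * (2 * x))))) (at x)"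
    by (auto intro!: derivative_eq_intros)
  have eq: "(2 * (a * (1 + a * x\<^sup>2)\<^sup>2) - 2 * x * (a * (2 * (1 + a * x\<^sup>2) * (a * (2 * x))))) / (a * (1 + a * x\<^sup>2)\<^sup>2 * (a * (1 + a * x\<^sup>2)\<^sup>2))
     = 2 * (1 - 3 * a * x\<^sup>2) / (a * (1 + a * x\<^sup>2) ^ 3)"
  proof -
    define y where "y = 1 + a * x\<^sup>2"
    have y: "y > 0" using p by (simp add: y_def)
    have ax: "a * x\<^sup>2 = y - 1" by (simp add: y_def)
    have "2 * (a * y\<^sup>2) - 2 * x * (a * (2 * y * (a * (2 * x)))) = 2 * a * y * (y - 4 * (a * x\<^sup>2))"
      by (simp add: power2_eq_square algebra_simps)
    also have "\<dots> = 2 * a * y * (1 - 3 * (a * x\<^sup>2)) - 0" unfolding ax by (simp add: algebra_simps)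
    finally have n: "2 * (a * y\<^sup>2) - 2 * x * (a * (2 * y * (a * (2 * x)))) = 2 * a * y * (1 - 3 * a * x\<^sup>2)"
      by (simp add: mult_ac)
    have "(2 * (a * y\<^sup>2) - 2 * x * (a * (2 * y * (a * (2 * x))))) / (a * y\<^sup>2 * (a * y\<^sup>2))
        = (2 * a * y * (1 - 3 * a * x\<^sup>2)) / (a * y * (a * y ^ 3))" unfolding n
      by (simp add: power2_eq_square power3_eq_cube mult_ac)
    also have "\<dots> = 2 * (1 - 3 * a * x\<^sup>2) / (a * y ^ 3)" using a y by (simp add: field_simps)
    finally show ?thesis unfolding y_def .
  qed
  show ?thesis using DERIV_divide[OF d1 d2] a p unfolding eq by simp
qed



lemma divle: "0 \<le> (X::real) \<Longrightarrow> 1 \<le> y \<Longrightarrow> X / y \<le> X"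
proof -
  assume X: "0 \<le> X" and y: "1 \<le> y"
  have "X / y \<le> X / 1" by (rule divide_left_mono) (use X y in auto)
  then show ?thesis by simp
qed

lemma absfrac: "(a::real) > 0 \<Longrightarrow> Y > 0 \<Longrightarrow> \<bar>2 * t / (a * Y)\<bar> = 2 / a * (\<bar>t\<bar> / Y)"
proof -
  assume a: "a > 0" and Y: "Y > 0"
  have "2 * t / (a * Y) = 2 / a * (t / Y)" by (rule times_divide_times_eq[symmetric])
  then show ?thesis using a Y by (simp add: abs_mult abs_div)
qed

lemma bndI'':
  fixes a x :: real assumes a: "a > 0"
  shows "\<bar>2 * (1 - a * x\<^sup>2) / (a * (1 + a * x\<^sup>2)\<^sup>2)\<bar> \<le> 2 / a"
proof -
  define y where "y = 1 + a * x\<^sup>2"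
  have y: "y \<ge> 1" using a by (simp add: y_def)
  have "\<bar>1 - a * x\<^sup>2\<bar> \<le> y\<^sup>2"
  proof -
    have "\<bar>1 - a * x\<^sup>2\<bar> \<le> y" using a by (simp add: y_def abs_le_iff)
    also have "y \<le> y\<^sup>2" using y by (simp add: power2_eq_square)
    finally show ?thesis .
  qed
  then have "\<bar>1 - a * x\<^sup>2\<bar> / y\<^sup>2 \<le> 1" using y by simp
  then have "2 / a * (\<bar>1 - a * x\<^sup>2\<bar> / y\<^sup>2) \<le> 2 / a * 1" using a by (intro mult_left_mono) auto
  moreover have "\<bar>2 * (1 - a * x\<^sup>2) / (a * y\<^sup>2)\<bar> = 2 / a * (\<bar>1 - a * x\<^sup>2\<bar> / y\<^sup>2)"
    using a y by (intro absfrac) auto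
  ultimately show ?thesis unfolding y_def by simp
qed

lemma bndG'':
  fixes a x :: real assumes a: "a > 0"
  shows "\<bar>2 * (1 - 3 * a * x\<^sup>2) / (a * (1 + a * x\<^sup>2) ^ 3)\<bar> \<le> 6 / a"
proof -
  define y where "y = 1 + a * x\<^sup>2"
  have y: "y \<ge> 1" using a by (simp add: y_def)
  have "\<bar>1 - 3 * a * x\<^sup>2\<bar> \<le> 3 * y ^ 3"
  proof -
    have "\<bar>1 - 3 * a * x\<^sup>2\<bar> \<le> 3 * y" using a by (simp add: y_def abs_le_iff)
    also have "3 * y \<le> 3 * y ^ 3"
    proof -
      have "1 \<le> y\<^sup>2" by (rule one_le_power[OF y])
      then have "y \<le> y * y\<^sup>2" using y by (simp add: mult_le_cancel_left1)
      also have "y * y\<^sup>2 = y ^ 3" by (simp add: power2_eq_square power3_eq_cube)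
      finally show ?thesis by simp
    qed
    finally show ?thesis .
  qed
  then have "\<bar>1 - 3 * a * x\<^sup>2\<bar> / y ^ 3 \<le> 3" using y by (simp add: divide_le_eq)
  then have "2 / a * (\<bar>1 - 3 * a * x\<^sup>2\<bar> / y ^ 3) \<le> 2 / a * 3" using a by (intro mult_left_mono) auto
  moreover have "\<bar>2 * (1 - 3 * a * x\<^sup>2) / (a * y ^ 3)\<bar> = 2 / a * (\<bar>1 - 3 * a * x\<^sup>2\<bar> / y ^ 3)"
    using a y by (intro absfrac) auto
  ultimately show ?thesis unfolding y_def by simp
qed

lemma bndI':
  fixes a x :: real assumes a: "a > 0"
  shows "\<bar>2 * x / (a * (1 + a * x\<^sup>2))\<bar> \<le> 2 / a * \<bar>x\<bar>"
proof -
  have y: "1 + a * x\<^sup>2 \<ge> 1" using a by simp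
  have Yp: "1 + a * x\<^sup>2 > 0" using y by linarith
  have "\<bar>2 * x / (a * (1 + a * x\<^sup>2))\<bar> = 2 / a * (\<bar>x\<bar> / (1 + a * x\<^sup>2))" by (rule absfrac[OF a Yp])
  also have "\<dots> = (2 / a * \<bar>x\<bar>) / (1 + a * x\<^sup>2)" by simp
  also have "\<dots> \<le> 2 / a * \<bar>x\<bar>"
  proof -
    have "0 \<le> 2 / a * \<bar>x\<bar>" using a by simp
    then show ?thesis using y by (rule divle)
  qed
  finally show ?thesis .
qed

lemma bndG':
  fixes a x :: real assumes a: "a > 0"
  shows "\<bar>2 * x / (a * (1 + a * x\<^sup>2)\<^sup>2)\<bar> \<le> 6 / a * \<bar>x\<bar>"
proof -
  have y: "(1 + a * x\<^sup>2)\<^sup>2 \<ge> 1" using a by (intro one_le_power) simp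
  have Yp: "(1 + a * x\<^sup>2)\<^sup>2 > 0" using y by linarith
  have "\<bar>2 * x / (a * (1 + a * x\<^sup>2)\<^sup>2)\<bar> = 2 / a * (\<bar>x\<bar> / (1 + a * x\<^sup>2)\<^sup>2)" by (rule absfrac[OF a Yp])
  also have "\<dots> = (2 / a * \<bar>x\<bar>) / (1 + a * x\<^sup>2)\<^sup>2" by simp
  also have "\<dots> \<le> 2 / a * \<bar>x\<bar>"
  proof -
    have "0 \<le> 2 / a * \<bar>x\<bar>" using a by simp
    then show ?thesis using y by (rule divle)
  qed
  also have "\<dots> \<le> 6 / a * \<bar>x\<bar>" using a by (intro mult_right_mono divide_right_mono) auto
  finally show ?thesis .
qed




lemma JD_int:
  fixes c b M R :: real and G' :: "real \<Rightarrow> real"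
  assumes p: "p \<in> Hsp R" and q: "q \<in> Hsp R" and G'c: "continuous_on UNIV G'"
    and M: "0 \<le> M" and G'b: "\<And>a. \<bar>G' a\<bar> \<le> M * \<bar>a\<bar>"
  shows "(\<lambda>r. r * snd p r * snd q r + c / r * fst p r * fst q r
      - 2 * b * r * fst p r * fst q r + r * G' (fst p r) * fst q r) integrable_on {0..R}"
proof -
  define S where "S = {0..R}"
  define K where "K = \<bar>c\<bar> + 2 * \<bar>b\<bar> * R\<^sup>2 + 2 * M * R\<^sup>2 + 1"
  note GM = measurable_compose[OF _ borel_measurable_continuous_onI[OF G'c]]
  have mid: "(\<lambda>x::real. x) \<in> borel_measurable (lebesgue_on S)" using mid by (simp add: S_def)
  have mp: "fst p \<in> borel_measurable (lebesgue_on S)" "snd p \<in> borel_measurable (lebesgue_on S)"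
    using Hsp_meas[OF p] by (auto simp: S_def)
  have mq: "fst q \<in> borel_measurable (lebesgue_on S)" "snd q \<in> borel_measurable (lebesgue_on S)"
    using Hsp_meas[OF q] by (auto simp: S_def)
  have intb: "\<And>f g :: real \<Rightarrow> real. f \<in> borel_measurable (lebesgue_on S) \<Longrightarrow> g integrable_on S \<Longrightarrow>
      (\<And>r. r \<in> S \<Longrightarrow> \<bar>f r\<bar> \<le> g r) \<Longrightarrow> f integrable_on S"
    unfolding S_def by (rule int_bound)
  define k where "k r = r * snd p r * snd q r + c / r * fst p r * fst q r
      - 2 * b * r * fst p r * fst q r + r * G' (fst p r) * fst q r" for r
  have b: "\<bar>k r\<bar> \<le> K * (Ep p r + Ep q r)" if "r \<in> S" for r
  proof -
    have r: "0 \<le> r" "r \<le> R" using that by (auto simp: S_def)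
    show ?thesis unfolding k_def K_def Ep_def by (rule ptw_B1[OF r M G'b])
  qed
  have m: "k \<in> borel_measurable (lebesgue_on S)" unfolding k_def by (rule mrules mid mp mq GM)+
  have i: "(\<lambda>r. K * (Ep p r + Ep q r)) integrable_on S"
    using icm[OF integrable_add[OF Hsp_int(3)[OF p] Hsp_int(3)[OF q]]] by (simp add: S_def)
  have "k integrable_on S" by (rule intb[OF m i b])
  then show ?thesis unfolding k_def S_def .
qed

lemma JF_int:
  fixes c b M R :: real and G :: "real \<Rightarrow> real"
  assumes p: "p \<in> Hsp R" and Gc: "continuous_on UNIV G"
    and M: "0 \<le> M" and Gb: "\<And>a. \<bar>G a\<bar> \<le> M * a\<^sup>2"
  shows "(\<lambda>r. r * (snd p r)\<^sup>2 + c / r * (fst p r)\<^sup>2 - 2 * b * r * (fst p r)\<^sup>2 + 2 * r * G (fst p r))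
     integrable_on {0..R}"
proof -
  define S where "S = {0..R}"
  define K where "K = \<bar>c\<bar> + 2 * \<bar>b\<bar> * R\<^sup>2 + 2 * M * R\<^sup>2 + 1"
  note GM = measurable_compose[OF _ borel_measurable_continuous_onI[OF Gc]]
  have mid: "(\<lambda>x::real. x) \<in> borel_measurable (lebesgue_on S)" using mid by (simp add: S_def)
  have mp: "fst p \<in> borel_measurable (lebesgue_on S)" "snd p \<in> borel_measurable (lebesgue_on S)"
    using Hsp_meas[OF p] by (auto simp: S_def)
  have intb: "\<And>f g :: real \<Rightarrow> real. f \<in> borel_measurable (lebesgue_on S) \<Longrightarrow> g integrable_on S \<Longrightarrow>
      (\<And>r. r \<in> S \<Longrightarrow> \<bar>f r\<bar> \<le> g r) \<Longrightarrow> f integrable_on S"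
    unfolding S_def by (rule int_bound)
  define F where "F r = r * (snd p r)\<^sup>2 + c / r * (fst p r)\<^sup>2 - 2 * b * r * (fst p r)\<^sup>2 + 2 * r * G (fst p r)" for r
  have b: "\<bar>F r\<bar> \<le> K * Ep p r" if "r \<in> S" for r
  proof -
    have r: "0 \<le> r" "r \<le> R" using that by (auto simp: S_def)
    show ?thesis unfolding F_def K_def Ep_def by (rule ptw_B3[OF r M Gb])
  qed
  have m: "F \<in> borel_measurable (lebesgue_on S)" unfolding F_def by (rule mrules mid mp GM)+
  have i: "(\<lambda>r. K * Ep p r) integrable_on S" using icm[OF Hsp_int(3)[OF p]] by (simp add: S_def)
  have "F integrable_on S" by (rule intb[OF m i b])
  then show ?thesis unfolding F_def S_def .
qed

lemma deriv_cont: "(\<And>x. (f has_real_derivative f' x) (at x)) \<Longrightarrow> continuous_on UNIV f"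
  by (meson DERIV_isCont continuous_at_imp_continuous_on)

theorem lemma4p1:
  fixes n :: int and \<alpha> R \<kappa> :: real and u :: hpt
  assumes "\<bar>n\<bar> \<ge> 1" and "\<alpha> > 0" and "R > 0" and "u \<in> Hsp R"
  shows "(H_critical R (Ikappa n \<alpha> \<kappa> R) u \<and> Hnorm R u \<noteq> 0) \<longleftrightarrow>
         (u \<in> Nehari n \<alpha> \<kappa> R \<and>
          M_critical R (Nehari n \<alpha> \<kappa> R) (Ikappa n \<alpha> \<kappa> R) (gammak n \<alpha> \<kappa> R) u)"
proof -
  note a = assms(2) and R = assms(3) and uH = assms(4)
  define c where "c = (real_of_int n)\<^sup>2"
  define b where "b = 1 / \<alpha> - \<kappa>"
  define GI where "GI s = \<alpha> powi (-2) * ln (1 + \<alpha> * s\<^sup>2)" for s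
  define GI' where "GI' s = 2 * s / (\<alpha> * (1 + \<alpha> * s\<^sup>2))" for s
  define GI'' where "GI'' s = 2 * (1 - \<alpha> * s\<^sup>2) / (\<alpha> * (1 + \<alpha> * s\<^sup>2)\<^sup>2)" for s
  define GG where "GG s = 1 / \<alpha> * s\<^sup>2 / (1 + \<alpha> * s\<^sup>2)" for s
  define GG' where "GG' s = 2 * s / (\<alpha> * (1 + \<alpha> * s\<^sup>2)\<^sup>2)" for s
  define GG'' where "GG'' s = 2 * (1 - 3 * \<alpha> * s\<^sup>2) / (\<alpha> * (1 + \<alpha> * s\<^sup>2) ^ 3)" for s
  define S where "S = {0..R}"
  have dI: "\<And>x. (GI has_real_derivative GI' x) (at x)"
    unfolding GI_def[abs_def] GI'_def using dGI[OF a] by simp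
  have dI': "\<And>x. (GI' has_real_derivative GI'' x) (at x)"
    unfolding GI'_def[abs_def] GI''_def using dGI'[OF a] by simp
  have dG: "\<And>x. (GG has_real_derivative GG' x) (at x)"
    unfolding GG_def[abs_def] GG'_def using dGG[OF a] by simp
  have dG': "\<And>x. (GG' has_real_derivative GG'' x) (at x)"
    unfolding GG'_def[abs_def] GG''_def using dGG'[OF a] by simp
  have M1: "0 \<le> 6 / \<alpha>" using a by simp
  have bI'': "\<bar>GI'' x\<bar> \<le> 6 / \<alpha>" for x
    using bndI''[OF a, of x] a unfolding GI''_def by (smt (verit) divide_right_mono)
  have bG'': "\<bar>GG'' x\<bar> \<le> 6 / \<alpha>" for x using bndG''[OF a, of x] unfolding GG''_def .
  have bI': "\<bar>GI' x\<bar> \<le> 6 / \<alpha> * \<bar>x\<bar>" for x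
  proof -
    have "2 / \<alpha> * \<bar>x\<bar> \<le> 6 / \<alpha> * \<bar>x\<bar>" using a by (intro mult_right_mono divide_right_mono) auto
    then show ?thesis using bndI'[OF a, of x] unfolding GI'_def by linarith
  qed
  have bG': "\<bar>GG' x\<bar> \<le> 6 / \<alpha> * \<bar>x\<bar>" for x using bndG'[OF a, of x] unfolding GG'_def .
  have tI: "\<bar>GI (x + h) - GI x - GI' x * h\<bar> \<le> 6 / \<alpha> * h\<^sup>2" for x h by (rule taylor2[OF dI dI' bI''])
  have tG: "\<bar>GG (x + h) - GG x - GG' x * h\<bar> \<le> 6 / \<alpha> * h\<^sup>2" for x h by (rule taylor2[OF dG dG' bG''])
  have I0: "GI 0 = 0" and G0: "GG 0 = 0" by (simp_all add: GI_def GG_def)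
  have cI: "continuous_on UNIV GI" "continuous_on UNIV GI'" using deriv_cont[OF dI] deriv_cont[OF dI'] .
  have cG: "continuous_on UNIV GG" "continuous_on UNIV GG'" using deriv_cont[OF dG] deriv_cont[OF dG'] .
  have Ieq: "Ikappa n \<alpha> \<kappa> R = JF c b R GI"
  proof (rule ext)
    fix p show "Ikappa n \<alpha> \<kappa> R p = JF c b R GI p"
      unfolding Ikappa_def JF_def c_def b_def GI_def by (simp add: mult_ac)
  qed
  have geq: "gammak n \<alpha> \<kappa> R = JF c b R GG"
  proof (rule ext)
    fix p show "gammak n \<alpha> \<kappa> R p = JF c b R GG p"
      unfolding gammak_def JF_def c_def b_def GG_def by (simp add: mult_ac)
  qed
  have DI: "has_H_deriv R (Ikappa n \<alpha> \<kappa> R) u (JD c b R GI' u)"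
    unfolding Ieq by (rule JF_deriv[OF R uH cI M1 tI bI' I0])
  have DG: "has_H_deriv R (gammak n \<alpha> \<kappa> R) u (JD c b R GG' u)"
    unfolding geq by (rule JF_deriv[OF R uH cG M1 tG bG' G0])
  define gg where "gg r = r * (snd u r)\<^sup>2 + c / r * (fst u r)\<^sup>2 - 2 * b * r * (fst u r)\<^sup>2
      + 2 * (1 / \<alpha>) * r * (fst u r)\<^sup>2 / (1 + \<alpha> * (fst u r)\<^sup>2)" for r
  have gam: "gammak n \<alpha> \<kappa> R u = 1/2 * integral S gg"
    unfolding gammak_def gg_def S_def c_def b_def by simp
  have L0u: "JD c b R GI' u u = 2 * gammak n \<alpha> \<kappa> R u"
  proof -
    have "JD c b R GI' u u = integral S gg"
      unfolding JD_def S_def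
    proof (rule integral_cong)
      fix r show "r * snd u r * snd u r + c / r * fst u r * fst u r - 2 * b * r * fst u r * fst u r
          + r * GI' (fst u r) * fst u r = gg r"
        unfolding gg_def GI'_def by (simp add: power2_eq_square mult_ac)
    qed
    then show ?thesis unfolding gam by simp
  qed
  have K0u: "JD c b R GG' u u \<noteq> 0" if g0: "gammak n \<alpha> \<kappa> R u = 0" and hn: "Hnorm R u \<noteq> 0"
  proof
    assume K0: "JD c b R GG' u u = 0"
    define kk where "kk r = r * snd u r * snd u r + c / r * fst u r * fst u r
      - 2 * b * r * fst u r * fst u r + r * GG' (fst u r) * fst u r" for r
    have kkint: "kk integrable_on S" unfolding kk_def S_def by (rule JD_int[OF uH uH cG(2) M1 bG'])
    have GGb: "\<bar>GG x\<bar> \<le> 6 / \<alpha> * x\<^sup>2" for x using tG[of 0 x] G0 bG'[of 0] by simp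
    have ggint: "gg integrable_on S"
    proof -
      have "(\<lambda>r. r * (snd u r)\<^sup>2 + c / r * (fst u r)\<^sup>2 - 2 * b * r * (fst u r)\<^sup>2 + 2 * r * GG (fst u r))
         integrable_on {0..R}" by (rule JF_int[OF uH cG(1) M1 GGb])
      moreover have "\<And>r. r * (snd u r)\<^sup>2 + c / r * (fst u r)\<^sup>2 - 2 * b * r * (fst u r)\<^sup>2 + 2 * r * GG (fst u r) = gg r"
        unfolding gg_def GG_def by (simp add: mult_ac)
      ultimately show ?thesis unfolding S_def by simp
    qed
    define \<phi> where "\<phi> r = gg r - kk r" for r
    have phiint: "\<phi> integrable_on S" unfolding \<phi>_def[abs_def] by (rule integrable_diff[OF ggint kkint])
    have phieq: "\<phi> r = 2 * r * (fst u r) ^ 4 / (1 + \<alpha> * (fst u r)\<^sup>2)\<^sup>2" for r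
    proof -
      define w where "w = fst u r"
      define y where "y = 1 + \<alpha> * w\<^sup>2"
      have y: "y > 0" using a by (simp add: y_def add_pos_nonneg)
      have "\<phi> r = 2 * (1 / \<alpha>) * r * w\<^sup>2 / y - r * (2 * w / (\<alpha> * y\<^sup>2)) * w"
        unfolding \<phi>_def gg_def kk_def GG'_def w_def[symmetric] y_def[symmetric] by (simp add: power2_eq_square)
      also have "\<dots> = 2 * r * w\<^sup>2 * (y - 1) / (\<alpha> * y\<^sup>2)"
        using a y by (simp add: field_simps power2_eq_square)
      also have "\<dots> = (\<alpha> * (2 * r * w ^ 4)) / (\<alpha> * y\<^sup>2)"
      proof -
        have "y - 1 = \<alpha> * w\<^sup>2" by (simp add: y_def)
        then have "2 * r * w\<^sup>2 * (y - 1) = \<alpha> * (2 * r * w ^ 4)"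
          by (simp add: power2_eq_square power4_eq_xxxx mult_ac)
        then show ?thesis by (simp only:)
      qed
      also have "\<dots> = 2 * r * w ^ 4 / y\<^sup>2" using a by simp
      finally show ?thesis unfolding w_def y_def .
    qed
    have phinn: "0 \<le> \<phi> r" if "r \<in> S" for r using that unfolding phieq by (auto simp: S_def)
    have "integral S \<phi> = integral S gg - integral S kk"
      unfolding \<phi>_def[abs_def] by (rule integral_diff[OF ggint kkint])
    moreover have "integral S kk = JD c b R GG' u u" unfolding JD_def kk_def S_def by simp
    ultimately have i0: "integral S \<phi> = 0" using g0 K0 gam by simp
    have Sl: "S \<in> sets lebesgue" by (simp add: S_def)
    have lint: "integrable (lebesgue_on S) \<phi>"
      by (rule absolutely_integrable_imp_integrable[OF nonnegative_absolutely_integrable_1[OF phiint phinn] Sl])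
    have "integral\<^sup>L (lebesgue_on S) \<phi> = 0" using lebesgue_integral_eq_integral[OF lint Sl] i0 by simp
    moreover have "AE x in lebesgue_on S. 0 \<le> \<phi> x" by (rule AE_I2) (use phinn Sl in auto)
    ultimately have "AE x in lebesgue_on S. \<phi> x = 0" using integral_nonneg_eq_0_iff_AE[OF lint] by blast
    then obtain N where N: "N \<in> null_sets (lebesgue_on S)"
      and NN: "{x \<in> space (lebesgue_on S). \<not> \<phi> x = 0} \<subseteq> N"
      unfolding eventually_ae_filter by blast
    have negN: "negligible (N \<union> {0})"
      using N Sl by (auto simp: null_sets_restrict_space negligible_iff_null_sets)
    have w0: "fst u x = 0" if x: "x \<in> S - (N \<union> {0})" for x
    proof -
      have "\<phi> x = 0" using NN x Sl by auto
      moreover have "x > 0" using x by (auto simp: S_def)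
      moreover have "(1 + \<alpha> * (fst u x)\<^sup>2)\<^sup>2 > 0"
      proof -
        have "1 + \<alpha> * (fst u x)\<^sup>2 > 0" using a by (simp add: add_pos_nonneg)
        then show ?thesis by simp
      qed
      ultimately show ?thesis unfolding phieq by simp
    qed
    have "integral S gg = integral S (\<lambda>r. r * (snd u r)\<^sup>2)"
      by (rule integral_spike[OF negN]) (simp add: gg_def w0)
    moreover have "Hip R u u = integral S (\<lambda>r. r * (snd u r)\<^sup>2)"
      unfolding Hip_def S_def[symmetric]
      by (rule integral_spike[OF negN]) (simp add: w0 power2_eq_square)
    ultimately have "Hip R u u = 0" using g0 gam by simp
    then have "Hnorm R u = 0" by (simp add: Hnorm_def)
    with hn show False by simp
  qed
  show ?thesis
  proof
    assume H: "H_critical R (Ikappa n \<alpha> \<kappa> R) u \<and> Hnorm R u \<noteq> 0"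
    then obtain L where L: "has_H_deriv R (Ikappa n \<alpha> \<kappa> R) u L" and L0: "\<forall>q\<in>Hsp R. L q = 0"
      unfolding H_critical_def by blast
    have "L u = JD c b R GI' u u" by (rule deriv_unique[OF L DI uH])
    then have g0: "gammak n \<alpha> \<kappa> R u = 0" using L0 uH L0u by simp
    have Nu: "u \<in> Nehari n \<alpha> \<kappa> R" using uH H g0 by (simp add: Nehari_def)
    have z: "\<forall>q\<in>Hsp R. L q = 0 * JD c b R GG' u q" using L0 by simp
    have "M_critical R (Nehari n \<alpha> \<kappa> R) (Ikappa n \<alpha> \<kappa> R) (gammak n \<alpha> \<kappa> R) u"
      unfolding M_critical_def using Nu L DG z by blast
    with Nu show "u \<in> Nehari n \<alpha> \<kappa> R \<and> M_critical R (Nehari n \<alpha> \<kappa> R) (Ikappa n \<alpha> \<kappa> R) (gammak n \<alpha> \<kappa> R) u"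
      by simp
  next
    assume N: "u \<in> Nehari n \<alpha> \<kappa> R \<and> M_critical R (Nehari n \<alpha> \<kappa> R) (Ikappa n \<alpha> \<kappa> R) (gammak n \<alpha> \<kappa> R) u"
    then have hn: "Hnorm R u \<noteq> 0" and g0: "gammak n \<alpha> \<kappa> R u = 0" by (auto simp: Nehari_def)
    from N obtain L K \<xi> where L: "has_H_deriv R (Ikappa n \<alpha> \<kappa> R) u L"
      and K: "has_H_deriv R (gammak n \<alpha> \<kappa> R) u K" and LK: "\<forall>q\<in>Hsp R. L q = \<xi> * K q"
      unfolding M_critical_def by blast
    have "L u = JD c b R GI' u u" by (rule deriv_unique[OF L DI uH])
    then have Lu: "L u = 0" using L0u g0 by simp
    have "K u = JD c b R GG' u u" by (rule deriv_unique[OF K DG uH])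
    then have Ku: "K u \<noteq> 0" using K0u[OF g0 hn] by simp
    have "\<xi> * K u = 0" using LK uH Lu by simp
    then have xi: "\<xi> = 0" using Ku by simp
    have "H_critical R (Ikappa n \<alpha> \<kappa> R) u"
      unfolding H_critical_def using uH L LK xi by auto
    with hn show "H_critical R (Ikappa n \<alpha> \<kappa> R) u \<and> Hnorm R u \<noteq> 0" by simp
  qed
qed


end
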